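(* A topological space is an MG-space if and only if it is a quotient space of some locally Menger space.
   Context: A space $X$ is Menger if for each sequence $(\mathcal{U}_n)$ of open covers of $X$ there is a sequence $(\mathcal{V}_n)$ with each $\mathcal{V}_n$ a finite subset of $\mathcal{U}_n$ and $\bigcup_{n}\bigcup\mathcal{V}_n=X$. A space $X$ is locally Menger if for each $x\in X$ there exist an open set $U$ and a Menger subspace $Y$ of $X$ with $x\in U\subseteq Y$. A space $X$ is Menger generated (an MG-space) if a subset $U\subseteq X$ is open in $X$ whenever $U\cap M$ is open in $M$ for every Menger subspace $M$ of $X$. *)

theory Defs
  imports "HOL-Analysis.Analysis"
begin

definition Menger_space :: "'a topology \<Rightarrow> bool" where
  "Menger_space X \<longleftrightarrow>
     (\<forall>\<U> :: nat \<Rightarrow> 'a set set.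
        (\<forall>n. (\<forall>U\<in>\<U> n. openin X U) \<and> topspace X \<subseteq> \<Union>(\<U> n)) \<longrightarrow>
        (\<exists>\<V> :: nat \<Rightarrow> 'a set set.
            (\<forall>n. \<V> n \<subseteq> \<U> n \<and> finite (\<V> n)) \<and>
            (\<Union>n. \<Union>(\<V> n)) = topspace X))"

definition Menger_subspace :: "'a topology \<Rightarrow> 'a set \<Rightarrow> bool" where
  "Menger_subspace X M \<longleftrightarrow> M \<subseteq> topspace X \<and> Menger_space (subtopology X M)"

definition locally_Menger :: "'a topology \<Rightarrow> bool" where
  "locally_Menger X \<longleftrightarrow>
     (\<forall>x\<in>topspace X. \<exists>U Y. openin X U \<and> Menger_subspace X Y \<and> x \<in> U \<and> U \<subseteq> Y)"

definition MG_space :: "'a topology \<Rightarrow> bool" where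
  "MG_space X \<longleftrightarrow>
     (\<forall>U. U \<subseteq> topspace X \<longrightarrow>
        (\<forall>M. Menger_subspace X M \<longrightarrow> openin (subtopology X M) (U \<inter> M)) \<longrightarrow>
        openin X U)"

end

theory Submission
  imports Defs
begin

lemma Menger_image:
  assumes M: "Menger_space Y" and f: "continuous_map Y X f"
  shows "Menger_space (subtopology X (f ` topspace Y))"
  unfolding Menger_space_def
proof (intro allI impI)
  let ?T = "f ` topspace Y"
  have fT: "?T \<subseteq> topspace X" using f by (auto simp: continuous_map_def)
  have tsp: "topspace (subtopology X ?T) = ?T" using fT by auto
  fix \<U> :: "nat \<Rightarrow> 'b set set"
  assume H: "\<forall>n. (\<forall>U\<in>\<U> n. openin (subtopology X ?T) U) \<and> topspace (subtopology X ?T) \<subseteq> \<Union>(\<U> n)"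
  define pre where "pre W = {y \<in> topspace Y. f y \<in> W}" for W
  have op: "openin Y (pre W)" if "W \<in> \<U> n" for W n
  proof -
    from H that have "openin (subtopology X ?T) W" by blast
    then obtain S where S: "openin X S" "W = S \<inter> ?T" by (auto simp: openin_subtopology)
    have "pre W = {y \<in> topspace Y. f y \<in> S}" using S by (auto simp: pre_def)
    then show ?thesis using f S(1) by (simp add: continuous_map_def)
  qed
  have cov: "\<forall>n. (\<forall>U\<in>pre ` \<U> n. openin Y U) \<and> topspace Y \<subseteq> \<Union>(pre ` \<U> n)"
  proof (intro allI conjI)
    fix n show "\<forall>U\<in>pre ` \<U> n. openin Y U" using op by blast
    show "topspace Y \<subseteq> \<Union>(pre ` \<U> n)"
    proof
      fix y assume y: "y \<in> topspace Y"
      then have "f y \<in> \<Union>(\<U> n)" using H tsp by blast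
      then obtain W where "W \<in> \<U> n" "f y \<in> W" by blast
      then show "y \<in> \<Union>(pre ` \<U> n)" using y by (auto simp: pre_def)
    qed
  qed
  then have "\<exists>\<V>'. (\<forall>n. \<V>' n \<subseteq> pre ` \<U> n \<and> finite (\<V>' n)) \<and>
    (\<Union>n. \<Union>(\<V>' n)) = topspace Y"
    using M unfolding Menger_space_def
    apply (erule_tac x="\<lambda>n. pre ` \<U> n" in allE)
    apply (erule mp)
    apply (rule cov)
    done
  then obtain \<V>' where V': "\<forall>n. \<V>' n \<subseteq> pre ` \<U> n \<and> finite (\<V>' n)"
    "(\<Union>n. \<Union>(\<V>' n)) = topspace Y"
    by (elim exE conjE)
  have "\<forall>n. \<exists>C. C \<subseteq> \<U> n \<and> finite C \<and> \<V>' n = pre ` C"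
  proof
    fix n
    have "finite (\<V>' n)" "\<V>' n \<subseteq> pre ` \<U> n" using V'(1) by auto
    then obtain C where "C \<subseteq> \<U> n" "finite C" "\<V>' n = pre ` C"
      using finite_subset_image[of "\<V>' n" pre "\<U> n"] by blast
    then show "\<exists>C. C \<subseteq> \<U> n \<and> finite C \<and> \<V>' n = pre ` C" by blast
  qed
  then obtain \<V> where V: "\<forall>n. \<V> n \<subseteq> \<U> n \<and> finite (\<V> n) \<and> \<V>' n = pre ` \<V> n"
    by (rule choice[THEN exE])
  show "\<exists>\<V>. (\<forall>n. \<V> n \<subseteq> \<U> n \<and> finite (\<V> n)) \<and> (\<Union>n. \<Union>(\<V> n)) = topspace (subtopology X ?T)"
  proof (intro exI conjI)
    show "\<forall>n. \<V> n \<subseteq> \<U> n \<and> finite (\<V> n)" using V by blast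
    show "(\<Union>n. \<Union>(\<V> n)) = topspace (subtopology X ?T)"
    proof
      show "(\<Union>n. \<Union>(\<V> n)) \<subseteq> topspace (subtopology X ?T)"
      proof (intro UN_least Union_least)
        fix n W assume "W \<in> \<V> n"
        then have "W \<in> \<U> n" using V by blast
        then have "openin (subtopology X ?T) W" using H by blast
        then show "W \<subseteq> topspace (subtopology X ?T)" by (rule openin_subset)
      qed
      show "topspace (subtopology X ?T) \<subseteq> (\<Union>n. \<Union>(\<V> n))"
      proof
        fix x assume "x \<in> topspace (subtopology X ?T)"
        then obtain y where y: "y \<in> topspace Y" "x = f y" using tsp by auto
        then have "y \<in> (\<Union>n. \<Union>(\<V>' n))" using V'(2) by simp
        then obtain n V where "V \<in> \<V>' n" "y \<in> V" by blast
        then obtain W where "W \<in> \<V> n" "y \<in> pre W" using V by blast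
        then show "x \<in> (\<Union>n. \<Union>(\<V> n))" using y by (auto simp: pre_def)
      qed
    qed
  qed
qed

lemma compact_Menger:
  assumes "compact_space X"
  shows "Menger_space X"
  unfolding Menger_space_def
proof (intro allI impI)
  fix \<U> :: "nat \<Rightarrow> 'a set set"
  assume H: "\<forall>n. (\<forall>U\<in>\<U> n. openin X U) \<and> topspace X \<subseteq> \<Union>(\<U> n)"
  have "\<forall>n. \<exists>F. finite F \<and> F \<subseteq> \<U> n \<and> topspace X \<subseteq> \<Union>F"
  proof
    fix n
    have "(\<forall>U\<in>\<U> n. openin X U) \<and> topspace X \<subseteq> \<Union>(\<U> n)" using H by blast
    then show "\<exists>F. finite F \<and> F \<subseteq> \<U> n \<and> topspace X \<subseteq> \<Union>F"
      by (rule compact_space_alt[THEN iffD1, OF assms, rule_format])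
  qed
  then obtain \<V> where V: "\<forall>n. finite (\<V> n) \<and> \<V> n \<subseteq> \<U> n \<and> topspace X \<subseteq> \<Union>(\<V> n)"
    by (rule choice[THEN exE])
  show "\<exists>\<V>. (\<forall>n. \<V> n \<subseteq> \<U> n \<and> finite (\<V> n)) \<and> (\<Union>n. \<Union>(\<V> n)) = topspace X"
  proof (intro exI conjI)
    show "\<forall>n. \<V> n \<subseteq> \<U> n \<and> finite (\<V> n)" using V by blast
    show "(\<Union>n. \<Union>(\<V> n)) = topspace X"
    proof
      show "(\<Union>n. \<Union>(\<V> n)) \<subseteq> topspace X"
      proof (intro UN_least Union_least)
        fix n W assume "W \<in> \<V> n"
        then have "W \<in> \<U> n" using V by blast
        then show "W \<subseteq> topspace X" using H openin_subset by blast
      qed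
      have "topspace X \<subseteq> \<Union>(\<V> 0)" using V by blast
      then show "topspace X \<subseteq> (\<Union>n. \<Union>(\<V> n))" by blast
    qed
  qed
qed

lemma Menger_singleton:
  assumes "x \<in> topspace X"
  shows "Menger_subspace X {x}"
proof -
  have "compactin X {x}" using assms by (simp add: finite_imp_compactin)
  then have "compact_space (subtopology X {x})" by (rule compact_space_subtopology)
  then have "Menger_space (subtopology X {x})" by (rule compact_Menger)
  then show ?thesis using assms by (simp add: Menger_subspace_def)
qed

theorem theorem4p12:
  fixes X :: "'a topology"
  shows "(MG_space X \<longrightarrow>
            (\<exists>(Y :: ('a set \<times> 'a) topology) f. locally_Menger Y \<and> quotient_map Y X f)) \<and>
         (\<forall>(Y :: 'b topology) f. locally_Menger Y \<and> quotient_map Y X f \<longrightarrow> MG_space X)"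
proof (intro conjI impI allI)
  assume MG: "MG_space X"
  define I where "I = {M. Menger_subspace X M}"
  define Y where "Y = sum_topology (\<lambda>M. subtopology X M) I"
  have IX: "M \<subseteq> topspace X" if "M \<in> I" for M using that by (simp add: I_def Menger_subspace_def)
  have tY: "topspace Y = {(M, x). M \<in> I \<and> x \<in> M}"
    using IX by (fastforce simp: Y_def)
  have "locally_Menger Y"
    unfolding locally_Menger_def
  proof
    fix p assume p: "p \<in> topspace Y"
    then obtain M x where Mx: "p = (M, x)" "M \<in> I" "x \<in> M" using tY by auto
    have o: "openin Y ({M} \<times> M)"
      unfolding Y_def openin_sum_topology
    proof (intro conjI ballI)
      show "{M} \<times> M \<subseteq> Sigma I (topspace \<circ> subtopology X)" using Mx IX[OF Mx(2)] by auto
      fix i assume "i \<in> I"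
      show "openin (subtopology X i) {x. (i, x) \<in> {M} \<times> M}"
      proof (cases "i = M")
        case True
        then have "{x. (i, x) \<in> {M} \<times> M} = topspace (subtopology X i)" using IX[OF Mx(2)] Mx by auto
        then show ?thesis by (metis openin_topspace)
      next
        case False
        then show ?thesis by simp
      qed
    qed
    have c: "continuous_map (subtopology X M) Y (\<lambda>x. (M, x))"
      unfolding Y_def using Mx(2) by (rule continuous_map_component_injection)
    have im: "(\<lambda>x. (M, x)) ` topspace (subtopology X M) = {M} \<times> M" using IX[OF Mx(2)] Mx by auto
    have "Menger_space (subtopology X M)" using Mx(2) by (simp add: I_def Menger_subspace_def)
    then have "Menger_space (subtopology Y ((\<lambda>x. (M, x)) ` topspace (subtopology X M)))"
      by (rule Menger_image[OF _ c])
    then have "Menger_space (subtopology Y ({M} \<times> M))"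
      by (simp only: im)
    moreover have "{M} \<times> M \<subseteq> topspace Y" using o by (rule openin_subset)
    ultimately have "Menger_subspace Y ({M} \<times> M)"
      by (simp add: Menger_subspace_def)
    moreover have "p \<in> {M} \<times> M" using Mx by simp
    ultimately show "\<exists>U Z. openin Y U \<and> Menger_subspace Y Z \<and> p \<in> U \<and> U \<subseteq> Z"
      using o by blast
  qed
  moreover have "quotient_map Y X snd"
    unfolding quotient_map_def
  proof (intro conjI allI impI)
    show "snd ` topspace Y = topspace X"
    proof
      show "snd ` topspace Y \<subseteq> topspace X" using tY IX by fastforce
      show "topspace X \<subseteq> snd ` topspace Y"
      proof
        fix x assume "x \<in> topspace X"
        then have "{x} \<in> I" using Menger_singleton I_def by simp
        then have "({x}, x) \<in> topspace Y" using tY by auto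
        then show "x \<in> snd ` topspace Y" by force
      qed
    qed
    fix U assume U: "U \<subseteq> topspace X"
    have eq: "{x. (i, x) \<in> {p \<in> topspace Y. snd p \<in> U}} = U \<inter> i" if "i \<in> I" for i
      using that tY by auto
    have sub: "{p \<in> topspace Y. snd p \<in> U} \<subseteq> Sigma I (topspace \<circ> (\<lambda>M. subtopology X M))"
      by (simp add: Y_def)
    have "openin Y {p \<in> topspace Y. snd p \<in> U} \<longleftrightarrow>
       (\<forall>i\<in>I. openin (subtopology X i) {x. (i, x) \<in> {p \<in> topspace Y. snd p \<in> U}})"
      unfolding Y_def openin_sum_topology using sub by (simp only: Y_def simp_thms)
    also have "\<dots> \<longleftrightarrow> (\<forall>i\<in>I. openin (subtopology X i) (U \<inter> i))"
      using eq by simp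
    also have "\<dots> \<longleftrightarrow> openin X U"
    proof
      assume "\<forall>i\<in>I. openin (subtopology X i) (U \<inter> i)"
      then show "openin X U" using MG U unfolding MG_space_def I_def by blast
    next
      assume "openin X U"
      then show "\<forall>i\<in>I. openin (subtopology X i) (U \<inter> i)"
        by (simp add: openin_subtopology_Int)
    qed
    finally show "openin Y {p \<in> topspace Y. snd p \<in> U} = openin X U" .
  qed
  ultimately show "\<exists>(Y :: ('a set \<times> 'a) topology) f. locally_Menger Y \<and> quotient_map Y X f"
    by blast
next
  fix Y :: "'b topology" and f
  assume A: "locally_Menger Y \<and> quotient_map Y X f"
  then have LM: "locally_Menger Y" and q: "quotient_map Y X f" by auto
  have cf: "continuous_map Y X f" using q by (rule quotient_imp_continuous_map)
  show "MG_space X"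
    unfolding MG_space_def
  proof (intro allI impI)
    fix U assume U: "U \<subseteq> topspace X"
      and H: "\<forall>M. Menger_subspace X M \<longrightarrow> openin (subtopology X M) (U \<inter> M)"
    let ?P = "{y \<in> topspace Y. f y \<in> U}"
    have "openin Y ?P"
    proof (subst openin_subopen, intro ballI)
      fix y assume y: "y \<in> ?P"
      then obtain V Z where VZ: "openin Y V" "Menger_subspace Y Z" "y \<in> V" "V \<subseteq> Z"
        using LM unfolding locally_Menger_def by blast
      have ZY: "Z \<subseteq> topspace Y" and MZ: "Menger_space (subtopology Y Z)"
        using VZ(2) unfolding Menger_subspace_def by auto
      have cZ: "continuous_map (subtopology Y Z) X f"
        using cf by (rule continuous_map_from_subtopology)
      have tZ: "topspace (subtopology Y Z) = Z" using ZY by auto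
      have "Menger_space (subtopology X (f ` topspace (subtopology Y Z)))"
        by (rule Menger_image[OF MZ cZ])
      then have "Menger_space (subtopology X (f ` Z))" by (simp only: tZ)
      moreover have "f ` Z \<subseteq> topspace X" using cf ZY by (auto simp: continuous_map_def)
      ultimately have "Menger_subspace X (f ` Z)" by (simp add: Menger_subspace_def)
      then have "openin (subtopology X (f ` Z)) (U \<inter> f ` Z)" using H by blast
      then obtain G where G: "openin X G" "U \<inter> f ` Z = G \<inter> f ` Z"
        by (auto simp: openin_subtopology)
      have oG: "openin Y {x \<in> topspace Y. f x \<in> G}" using cf G(1) by (simp add: continuous_map_def)
      have "f y \<in> U \<inter> f ` Z" using y VZ by blast
      then have fyG: "f y \<in> G" using G(2) by blast
      show "\<exists>T. openin Y T \<and> y \<in> T \<and> T \<subseteq> ?P"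
      proof (intro exI conjI)
        show "openin Y (V \<inter> {x \<in> topspace Y. f x \<in> G})" using VZ(1) oG by (rule openin_Int)
        show "y \<in> V \<inter> {x \<in> topspace Y. f x \<in> G}" using VZ y fyG by blast
        show "V \<inter> {x \<in> topspace Y. f x \<in> G} \<subseteq> ?P"
        proof
          fix z assume z: "z \<in> V \<inter> {x \<in> topspace Y. f x \<in> G}"
          then have "f z \<in> G \<inter> f ` Z" using VZ(4) by blast
          then have "f z \<in> U" using G(2) by blast
          then show "z \<in> ?P" using z by blast
        qed
      qed
    qed
    then show "openin X U" using q U unfolding quotient_map_def by blast
  qed
qed

end
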